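(* If a circuit $f:a\to b$ is safe, then every polynomial in the tuple $[\![f]\!]$ has all exponents in $\{0,1\}$, i.e. contains no monomial in which some variable appears with exponent at least $2$.
   Context: A circuit is a morphism of the free symmetric strict monoidal category whose objects are natural numbers (tensor = addition) generated by $\mathsf{discard}:1\to 0$, $\mathsf{copy}:1\to 2$, $\mathsf{zero}:0\to1$, $\mathsf{add}:2\to1$, $\mathsf{one}:0\to 1$, $\mathsf{and}:2\to 1$. $[\![\cdot]\!]$ assigns to each circuit $f:a\to b$ a $b$-tuple of polynomials in $\mathbb{Z}_2[x_1,\dots,x_a]$ (genuine polynomials, $x^2\neq x$), compositionally: composition is substitution, tensor is juxtaposition with variables renumbered, symmetries permute variables, and $\mathsf{discard}\mapsto\langle\rangle$, $\mathsf{copy}\mapsto\langle x_1,x_1\rangle$, $\mathsf{zero}\mapsto\langle0\rangle$, $\mathsf{add}\mapsto\langle x_1+x_2\rangle$, $\mathsf{one}\mapsto\langle1\rangle$, $\mathsf{and}\mapsto\langle x_1x_2\rangle$. View a circuit as a directed graph whose nodes are wires and whose edges go from each input wire of a generator occurrence to each of its output wires. A circuit $c$ is safe if for every occurrence of $\mathsf{and}$ in $c$, there is no input port of $c$ from which both input ports of that $\mathsf{and}$ are reachable by a forward path. *)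

theory Defs
  imports Main "HOL-Library.Poly_Mapping" "HOL-Library.Z2"
begin

type_synonym mpoly = "(nat \<Rightarrow>\<^sub>0 nat) \<Rightarrow>\<^sub>0 bit"

definition Var :: "nat \<Rightarrow> mpoly" where
  "Var i = Poly_Mapping.single (Poly_Mapping.single i 1) 1"

definition cst :: "bit \<Rightarrow> mpoly" where
  "cst c = Poly_Mapping.single 0 c"

definition subst :: "(nat \<Rightarrow> mpoly) \<Rightarrow> mpoly \<Rightarrow> mpoly" where
  "subst q p = sum (\<lambda>mon. cst (Poly_Mapping.lookup p mon) * prod (\<lambda>v. q v ^ Poly_Mapping.lookup mon v) (Poly_Mapping.keys mon)) (Poly_Mapping.keys p)"

datatype gen = Discard | Copy | Zero | Add | One | And

fun gdom :: "gen \<Rightarrow> nat" where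
  "gdom Discard = 1" | "gdom Copy = 1" | "gdom Zero = 0"
| "gdom Add = 2" | "gdom One = 0" | "gdom And = 2"

fun gcod :: "gen \<Rightarrow> nat" where
  "gcod Discard = 0" | "gcod Copy = 2" | "gcod Zero = 1"
| "gcod Add = 1" | "gcod One = 1" | "gcod And = 1"

datatype circ = Gen gen | Id nat | Swap nat nat | Seq circ circ | Par circ circ

fun cdom :: "circ \<Rightarrow> nat" where
  "cdom (Gen g) = gdom g" | "cdom (Id n) = n" | "cdom (Swap m n) = m + n"
| "cdom (Seq f g) = cdom f" | "cdom (Par f g) = cdom f + cdom g"

fun ccod :: "circ \<Rightarrow> nat" where
  "ccod (Gen g) = gcod g" | "ccod (Id n) = n" | "ccod (Swap m n) = n + m"
| "ccod (Seq f g) = ccod g" | "ccod (Par f g) = ccod f + ccod g"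

fun wt :: "circ \<Rightarrow> bool" where
  "wt (Seq f g) = (wt f \<and> wt g \<and> ccod f = cdom g)"
| "wt (Par f g) = (wt f \<and> wt g)"
| "wt _ = True"

fun gsem :: "gen \<Rightarrow> mpoly list" where
  "gsem Discard = []"
| "gsem Copy = [Var 0, Var 0]"
| "gsem Zero = [0]"
| "gsem Add = [Var 0 + Var 1]"
| "gsem One = [1]"
| "gsem And = [Var 0 * Var 1]"

fun sem :: "circ \<Rightarrow> mpoly list" where
  "sem (Gen g) = gsem g"
| "sem (Id n) = map Var [0..<n]"
| "sem (Swap m n) = map Var ([m..<m+n] @ [0..<m])"
| "sem (Seq f g) = map (subst (\<lambda>i. sem f ! i)) (sem g)"
| "sem (Par f g) = sem f @ map (subst (\<lambda>i. Var (i + cdom f))) (sem g)"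

text \<open>Given the wire ids of the inputs of a circuit and a fresh-id counter, returns
  (wire ids of the outputs, edge set, list of input-wire pairs of the and-occurrences,
  next fresh id).\<close>
fun graph :: "circ \<Rightarrow> nat list \<Rightarrow> nat \<Rightarrow>
    nat list \<times> (nat \<times> nat) set \<times> (nat \<times> nat) list \<times> nat" where
  "graph (Gen g) ins k =
     (let outs = [k..<k + gcod g] in
      (outs, set ins \<times> set outs,
       (if g = And then [(ins ! 0, ins ! 1)] else []), k + gcod g))"
| "graph (Id n) ins k = (ins, {}, [], k)"
| "graph (Swap m n) ins k = (drop m ins @ take m ins, {}, [], k)"
| "graph (Seq f g) ins k =
     (case graph f ins k of (o1, e1, a1, k1) \<Rightarrow>
       (case graph g o1 k1 of (o2, e2, a2, k2) \<Rightarrow> (o2, e1 \<union> e2, a1 @ a2, k2)))"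
| "graph (Par f g) ins k =
     (case graph f (take (cdom f) ins) k of (o1, e1, a1, k1) \<Rightarrow>
       (case graph g (drop (cdom f) ins) k1 of (o2, e2, a2, k2) \<Rightarrow>
          (o1 @ o2, e1 \<union> e2, a1 @ a2, k2)))"

definition safe :: "circ \<Rightarrow> bool" where
  "safe c = (case graph c [0..<cdom c] (cdom c) of (outs, E, ands, k) \<Rightarrow>
     (\<forall>(p, q) \<in> set ands. \<not> (\<exists>i < cdom c. (i, p) \<in> E\<^sup>* \<and> (i, q) \<in> E\<^sup>*)))"

end

theory Submission
  imports Defs
begin

declare mult_bit_eq_and[simp del] add_bit_eq_xor[simp del]

definition MM :: "(nat \<Rightarrow> mpoly) \<Rightarrow> (nat \<Rightarrow>\<^sub>0 nat) \<Rightarrow> mpoly" where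
  "MM Q mon = prod (\<lambda>v. Q v ^ Poly_Mapping.lookup mon v) (Poly_Mapping.keys mon)"

lemma cst_0[simp]: "cst 0 = 0" by (simp add: cst_def)
lemma cst_1[simp]: "cst 1 = 1" by (simp add: cst_def)
lemma cst_add: "cst (a + b) = cst a + cst b" unfolding cst_def by (rule single_add)
lemma cst_mult: "cst (a * b) = cst a * cst b" by (simp add: cst_def mult_single)

lemma subst_superset:
  assumes "finite S" "Poly_Mapping.keys p \<subseteq> S"
  shows "subst Q p = (\<Sum>mon\<in>S. cst (Poly_Mapping.lookup p mon) * MM Q mon)"
  unfolding subst_def MM_def
  by (rule sum.mono_neutral_left) (use assms in \<open>auto simp: in_keys_iff\<close>)

lemma subst_add: "subst Q (p + q) = subst Q p + subst Q q"
proof -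
  let ?S = "Poly_Mapping.keys p \<union> Poly_Mapping.keys q"
  have "subst Q (p + q) = (\<Sum>mon\<in>?S. cst (Poly_Mapping.lookup (p+q) mon) * MM Q mon)"
    by (rule subst_superset) (auto dest: set_mp[OF keys_add])
  also have "\<dots> = (\<Sum>mon\<in>?S. cst (Poly_Mapping.lookup p mon) * MM Q mon) + (\<Sum>mon\<in>?S. cst (Poly_Mapping.lookup q mon) * MM Q mon)"
    by (simp add: lookup_add cst_add distrib_right sum.distrib)
  also have "\<dots> = subst Q p + subst Q q"
    by (simp add: subst_superset[symmetric])
  finally show ?thesis .
qed

lemma subst_0[simp]: "subst Q 0 = 0" by (simp add: subst_def)

lemma subst_sum: "subst Q (sum f A) = sum (\<lambda>x. subst Q (f x)) A"
  by (induction A rule: infinite_finite_induct) (auto simp: subst_add)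

lemma subst_single: "subst Q (Poly_Mapping.single a c) = cst c * MM Q a"
  by (cases "c = 0") (auto simp: subst_def MM_def)

lemma pm_expand: "(p :: 'a \<Rightarrow>\<^sub>0 'b::comm_monoid_add) = (\<Sum>a\<in>Poly_Mapping.keys p. Poly_Mapping.single a (Poly_Mapping.lookup p a))"
  by (rule poly_mapping_eqI) (auto simp: lookup_sum lookup_single when_def in_keys_iff)

lemma MM_superset:
  assumes "finite S" "Poly_Mapping.keys mon \<subseteq> S"
  shows "MM Q mon = prod (\<lambda>v. Q v ^ Poly_Mapping.lookup mon v) S"
  unfolding MM_def
  by (rule prod.mono_neutral_left) (use assms in \<open>auto simp: in_keys_iff\<close>)

lemma MM_add: "MM Q (a + b) = MM Q a * MM Q b"
proof -
  let ?S = "Poly_Mapping.keys a \<union> Poly_Mapping.keys b"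
  have "MM Q (a + b) = prod (\<lambda>v. Q v ^ Poly_Mapping.lookup (a+b) v) ?S"
    by (rule MM_superset) (auto dest: set_mp[OF keys_add])
  also have "\<dots> = prod (\<lambda>v. Q v ^ Poly_Mapping.lookup a v) ?S * prod (\<lambda>v. Q v ^ Poly_Mapping.lookup b v) ?S"
    by (simp add: lookup_add power_add prod.distrib)
  also have "\<dots> = MM Q a * MM Q b" by (simp add: MM_superset[symmetric])
  finally show ?thesis .
qed

lemma subst_mult: "subst Q (p * q) = subst Q p * subst Q q"
proof -
  have "p * q = (\<Sum>a\<in>Poly_Mapping.keys p. Poly_Mapping.single a (Poly_Mapping.lookup p a)) *
      (\<Sum>b\<in>Poly_Mapping.keys q. Poly_Mapping.single b (Poly_Mapping.lookup q b))"
    by (simp only: pm_expand[of p, symmetric] pm_expand[of q, symmetric])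
  also have "\<dots> = (\<Sum>a\<in>Poly_Mapping.keys p. \<Sum>b\<in>Poly_Mapping.keys q.
      Poly_Mapping.single (a + b) (Poly_Mapping.lookup p a * Poly_Mapping.lookup q b))"
    by (simp add: sum_product mult_single)
  finally have "subst Q (p * q) = (\<Sum>a\<in>Poly_Mapping.keys p. \<Sum>b\<in>Poly_Mapping.keys q.
      (cst (Poly_Mapping.lookup p a) * MM Q a) * (cst (Poly_Mapping.lookup q b) * MM Q b))"
    by (simp add: subst_sum subst_single MM_add cst_mult ac_simps)
  also have "\<dots> = subst Q p * subst Q q"
    unfolding subst_def MM_def sum_product ..
  finally show ?thesis .
qed

lemma subst_Var[simp]: "subst Q (Var i) = Q i"
  by (simp add: Var_def subst_single MM_def)

lemma subst_cst[simp]: "subst Q (cst c) = cst c"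
  by (simp add: cst_def subst_single MM_def)

lemma subst_1[simp]: "subst Q 1 = 1"
  using subst_cst[of Q 1] by simp

lemma subst_power: "subst Q (x ^ n) = subst Q x ^ n"
  by (induction n) (auto simp: subst_mult)

lemma subst_prod: "subst Q (prod f A) = prod (\<lambda>x. subst Q (f x)) A"
  by (induction A rule: infinite_finite_induct) (auto simp: subst_mult)

lemma subst_comp: "subst Q (subst P p) = subst (\<lambda>i. subst Q (P i)) p"
  unfolding subst_def[of P] subst_sum subst_mult subst_prod subst_power subst_cst
  unfolding subst_def[of "\<lambda>i. subst Q (P i)"] ..

lemma single_sum1: "finite A \<Longrightarrow> (Poly_Mapping.single (sum f A) (1::bit) :: mpoly) = prod (\<lambda>x. Poly_Mapping.single (f x) 1) A"
proof (induction A rule: finite_induct)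
  case (insert x F)
  have "(Poly_Mapping.single (sum f (insert x F)) (1::bit) :: mpoly) = Poly_Mapping.single (f x + sum f F) (1 * 1)"
    using insert by simp
  also have "\<dots> = Poly_Mapping.single (f x) 1 * Poly_Mapping.single (sum f F) 1"
    by (rule mult_single[symmetric])
  finally show ?case using insert by simp
qed simp

lemma single_pow: "(Poly_Mapping.single (Poly_Mapping.single v e) (1::bit) :: mpoly) = (Poly_Mapping.single (Poly_Mapping.single v 1) 1) ^ e"
proof (induction e)
  case 0 then show ?case by simp
next
  case (Suc e)
  have "Poly_Mapping.single v (Suc e) = Poly_Mapping.single v 1 + Poly_Mapping.single v e"
    by (simp add: single_add[symmetric])
  then have "(Poly_Mapping.single (Poly_Mapping.single v (Suc e)) (1::bit) :: mpoly) = Poly_Mapping.single (Poly_Mapping.single v 1 + Poly_Mapping.single v e) (1 * 1)"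
    by simp
  also have "\<dots> = Poly_Mapping.single (Poly_Mapping.single v 1) 1 * Poly_Mapping.single (Poly_Mapping.single v e) 1"
    by (rule mult_single[symmetric])
  finally show ?case using Suc by simp
qed

lemma MM_Var: "MM Var mon = Poly_Mapping.single mon 1"
proof -
  have "Poly_Mapping.single mon (1::bit) = Poly_Mapping.single (\<Sum>a\<in>Poly_Mapping.keys mon. Poly_Mapping.single a (Poly_Mapping.lookup mon a)) 1"
    by (simp only: pm_expand[of mon, symmetric])
  also have "\<dots> = MM Var mon"
    by (simp only: single_sum1 finite_keys MM_def Var_def single_pow[symmetric])
  finally show ?thesis by (rule sym)
qed

lemma subst_Var_id: "subst Var p = p"
proof -
  have "subst Var p = (\<Sum>a\<in>Poly_Mapping.keys p. Poly_Mapping.single a (Poly_Mapping.lookup p a))"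
    unfolding subst_def MM_def[symmetric] MM_Var
    by (simp add: cst_def mult_single)
  then show ?thesis by (simp only: pm_expand[of p, symmetric])
qed


definition MLin :: "mpoly \<Rightarrow> bool" where
  "MLin p = (\<forall>m\<in>Poly_Mapping.keys p. \<forall>i. Poly_Mapping.lookup m i \<le> 1)"

definition vars :: "mpoly \<Rightarrow> nat set" where
  "vars p = (\<Union>m\<in>Poly_Mapping.keys p. Poly_Mapping.keys m)"

lemma MLin_0[simp]: "MLin 0" and vars_0[simp]: "vars 0 = {}"
  by (auto simp: MLin_def vars_def)

lemma MLin_1[simp]: "MLin 1" and vars_1[simp]: "vars 1 = {}"
  by (auto simp: MLin_def vars_def)

lemma MLin_add: "MLin p \<Longrightarrow> MLin q \<Longrightarrow> MLin (p + q)"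
  unfolding MLin_def by (meson Un_iff keys_add subsetD)

lemma vars_add: "vars (p + q) \<subseteq> vars p \<union> vars q"
  unfolding vars_def using keys_add[of p q] by auto

lemma keys_add_nat: "Poly_Mapping.keys (a + b :: nat \<Rightarrow>\<^sub>0 nat) = Poly_Mapping.keys a \<union> Poly_Mapping.keys b"
  by (auto simp: in_keys_iff lookup_add)

lemma vars_mult: "vars (p * q) \<subseteq> vars p \<union> vars q"
proof
  fix i assume "i \<in> vars (p * q)"
  then obtain m where m: "m \<in> Poly_Mapping.keys (p * q)" "i \<in> Poly_Mapping.keys m" by (auto simp: vars_def)
  then obtain a b where ab: "m = a + b" "a \<in> Poly_Mapping.keys p" "b \<in> Poly_Mapping.keys q"
    using keys_mult[of p q] by blast
  then show "i \<in> vars p \<union> vars q" using m(2) by (auto simp: vars_def keys_add_nat)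
qed

lemma MLin_mult:
  assumes "MLin p" "MLin q" "vars p \<inter> vars q = {}"
  shows "MLin (p * q)"
  unfolding MLin_def
proof (intro ballI allI)
  fix m i assume "m \<in> Poly_Mapping.keys (p * q)"
  then obtain a b where ab: "m = a + b" "a \<in> Poly_Mapping.keys p" "b \<in> Poly_Mapping.keys q"
    using keys_mult[of p q] by blast
  have "Poly_Mapping.lookup a i = 0 \<or> Poly_Mapping.lookup b i = 0"
  proof (rule ccontr)
    assume "\<not> ?thesis"
    then have "i \<in> vars p" "i \<in> vars q" using ab by (auto simp: vars_def in_keys_iff)
    then show False using assms(3) by blast
  qed
  moreover have "Poly_Mapping.lookup a i \<le> 1" "Poly_Mapping.lookup b i \<le> 1"
    using assms(1,2) ab by (auto simp: MLin_def)
  ultimately show "Poly_Mapping.lookup m i \<le> 1" using ab by (auto simp: lookup_add)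
qed

lemma keys_Var: "Poly_Mapping.keys (Var t) = {Poly_Mapping.single t 1}"
  by (simp add: Var_def)

lemma MLin_Var: "MLin (Var t)" and vars_Var: "vars (Var t) = {t}"
  by (auto simp: MLin_def vars_def keys_Var lookup_single when_def)

lemma len_sem: "wt c \<Longrightarrow> length (sem c) = ccod c"
proof (induction c)
  case (Gen g) then show ?case by (cases g) auto
qed auto

lemma len_graph: "wt c \<Longrightarrow> length ins = cdom c \<Longrightarrow> length (fst (graph c ins k)) = ccod c"
proof (induction c arbitrary: ins k)
  case (Seq f g)
  obtain o1 e1 a1 k1 where g1: "graph f ins k = (o1, e1, a1, k1)" by (cases "graph f ins k") auto
  obtain o2 e2 a2 k2 where g2: "graph g o1 k1 = (o2, e2, a2, k2)" by (cases "graph g o1 k1") auto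
  have "length o1 = ccod f" using Seq.IH(1)[of ins k] Seq.prems g1 by simp
  then have "length o2 = ccod g" using Seq.IH(2)[of o1 k1] Seq.prems g2 by simp
  then show ?case using g1 g2 by simp
next
  case (Par f g)
  obtain o1 e1 a1 k1 where g1: "graph f (take (cdom f) ins) k = (o1, e1, a1, k1)" by (cases "graph f (take (cdom f) ins) k") auto
  obtain o2 e2 a2 k2 where g2: "graph g (drop (cdom f) ins) k1 = (o2, e2, a2, k2)" by (cases "graph g (drop (cdom f) ins) k1") auto
  have "length o1 = ccod f" using Par.IH(1)[of "take (cdom f) ins" k] Par.prems g1 by simp
  moreover have "length o2 = ccod g" using Par.IH(2)[of "drop (cdom f) ins" k1] Par.prems g2 by simp
  ultimately show ?case using g1 g2 by simp
qed (auto simp: Let_def)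


definition Rch :: "(nat \<times> nat) set \<Rightarrow> nat \<Rightarrow> nat \<Rightarrow> nat set" where
  "Rch R N w = {i. i < N \<and> (i, w) \<in> R\<^sup>*}"

lemma Rch_step: "(x, y) \<in> R \<Longrightarrow> Rch R N x \<subseteq> Rch R N y"
  unfolding Rch_def by (auto intro: rtrancl_into_rtrancl)

lemma main_lemma:
  "wt c \<Longrightarrow> length ins = cdom c \<Longrightarrow> graph c ins k = (outs, E, ands, k') \<Longrightarrow> E \<subseteq> R \<Longrightarrow>
   set ands \<subseteq> A \<Longrightarrow> (\<forall>(a,b)\<in>A. Rch R N a \<inter> Rch R N b = {}) \<Longrightarrow>
   (\<forall>t<cdom c. MLin (Q t) \<and> vars (Q t) \<subseteq> Rch R N (ins!t)) \<Longrightarrow> j < ccod c \<Longrightarrow>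
   MLin (subst Q (sem c ! j)) \<and> vars (subst Q (sem c ! j)) \<subseteq> Rch R N (outs ! j)"
proof (induction c arbitrary: ins k outs E ands k' Q j)
  case (Gen g)
  have outs: "outs = [k..<k + gcod g]" and E: "E = set ins \<times> set outs"
    and ands: "ands = (if g = And then [(ins ! 0, ins ! 1)] else [])"
    using Gen.prems(3) by (auto simp: Let_def)
  have hr: "Rch R N (ins!t) \<subseteq> Rch R N (outs!j)" if "t < gdom g" for t
  proof (rule Rch_step)
    have "ins!t \<in> set ins" using that Gen.prems(2) by simp
    moreover have "outs!j \<in> set outs" using Gen.prems(8) outs by simp
    ultimately show "(ins!t, outs!j) \<in> R" using E Gen.prems(4) by blast
  qed
  have Q: "MLin (Q t)" "vars (Q t) \<subseteq> Rch R N (outs!j)" if "t < gdom g" for t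
    using Gen.prems(7) hr[OF that] that by auto
  show ?case
  proof (cases g)
    case Discard then show ?thesis using Gen.prems(8) by simp
  next
    case Copy then show ?thesis using Gen.prems(8) Q[of 0] by (auto simp: nth_Cons split: nat.splits)
  next
    case Zero then show ?thesis using Gen.prems(8) by simp
  next
    case One then show ?thesis using Gen.prems(8) by simp
  next
    case Add then show ?thesis using Gen.prems(8) Q[of 0] Q[of 1] vars_add[of "Q 0" "Q 1"]
      by (auto simp: subst_add intro!: MLin_add)
  next
    case And
    have "(ins!0, ins!1) \<in> A" using ands And Gen.prems(5) by simp
    then have "Rch R N (ins!0) \<inter> Rch R N (ins!1) = {}" using Gen.prems(6) by blast
    moreover have "vars (Q 0) \<subseteq> Rch R N (ins!0)" "vars (Q 1) \<subseteq> Rch R N (ins!1)"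
      using Gen.prems(7) And by auto
    ultimately have "vars (Q 0) \<inter> vars (Q 1) = {}" by blast
    then show ?thesis using And Gen.prems(8) Q[of 0] Q[of 1] vars_mult[of "Q 0" "Q 1"]
      by (auto simp: subst_mult intro!: MLin_mult)
  qed
next
  case (Id n)
  then show ?case by auto
next
  case (Swap m n)
  have outs: "outs = drop m ins @ take m ins" using Swap.prems(3) by simp
  show ?case
  proof (cases "j < n")
    case True
    then have "sem (Swap m n) ! j = Var (m + j)" "outs ! j = ins ! (m + j)"
      using Swap.prems(2) outs by (auto simp: nth_append)
    then show ?thesis using Swap.prems(7) True by auto
  next
    case False
    then have "sem (Swap m n) ! j = Var (j - n)" "outs ! j = ins ! (j - n)"
      using Swap.prems(2,8) outs by (auto simp: nth_append)
    then show ?thesis using Swap.prems(7,8) False by auto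
  qed
next
  case (Seq f g)
  obtain o1 e1 a1 k1 where g1: "graph f ins k = (o1, e1, a1, k1)" by (cases "graph f ins k") auto
  obtain o2 e2 a2 k2 where g2: "graph g o1 k1 = (o2, e2, a2, k2)" by (cases "graph g o1 k1") auto
  have res: "outs = o2" "E = e1 \<union> e2" "ands = a1 @ a2" using Seq.prems(3) g1 g2 by auto
  have lo1: "length o1 = cdom g" using len_graph[of f ins k] Seq.prems(1,2) g1 by simp
  let ?Q = "\<lambda>i. subst Q (sem f ! i)"
  have hf: "MLin (?Q t) \<and> vars (?Q t) \<subseteq> Rch R N (o1 ! t)" if "t < cdom g" for t
    using Seq.IH(1)[of ins k o1 e1 a1 k1 Q t] g1 Seq.prems res that by auto
  have hg: "MLin (subst ?Q (sem g ! j)) \<and> vars (subst ?Q (sem g ! j)) \<subseteq> Rch R N (o2 ! j)"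
    using Seq.IH(2)[of o1 k1 o2 e2 a2 k2 ?Q j] g2 lo1 Seq.prems res hf by auto
  have "j < length (sem g)" using Seq.prems len_sem[of g] by auto
  then have "subst Q (sem (Seq f g) ! j) = subst ?Q (sem g ! j)" by (simp add: subst_comp)
  then show ?case using hg res by simp
next
  case (Par f g)
  obtain o1 e1 a1 k1 where g1: "graph f (take (cdom f) ins) k = (o1, e1, a1, k1)" by (cases "graph f (take (cdom f) ins) k") auto
  obtain o2 e2 a2 k2 where g2: "graph g (drop (cdom f) ins) k1 = (o2, e2, a2, k2)" by (cases "graph g (drop (cdom f) ins) k1") auto
  have res: "outs = o1 @ o2" "E = e1 \<union> e2" "ands = a1 @ a2" using Par.prems(3) g1 g2 by auto
  have lo1: "length o1 = ccod f" using len_graph[of f "take (cdom f) ins" k] Par.prems(1,2) g1 by simp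
  have ls: "length (sem f) = ccod f" using Par.prems(1) len_sem[of f] by simp
  show ?case
  proof (cases "j < ccod f")
    case True
    have "MLin (subst Q (sem f ! j)) \<and> vars (subst Q (sem f ! j)) \<subseteq> Rch R N (o1 ! j)"
      using Par.IH(1)[of "take (cdom f) ins" k o1 e1 a1 k1 Q j] g1 Par.prems res True by auto
    then show ?thesis using True res lo1 ls by (simp add: nth_append)
  next
    case False
    let ?Q = "\<lambda>i. Q (i + cdom f)"
    have "MLin (subst ?Q (sem g ! (j - ccod f))) \<and> vars (subst ?Q (sem g ! (j - ccod f))) \<subseteq> Rch R N (o2 ! (j - ccod f))"
      using Par.IH(2)[of "drop (cdom f) ins" k1 o2 e2 a2 k2 ?Q "j - ccod f"] g2 Par.prems res False by (auto simp: add.commute)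
    moreover have "subst Q (sem (Par f g) ! j) = subst ?Q (sem g ! (j - ccod f))"
      using False ls Par.prems(1,8) len_sem[of g] by (simp add: nth_append subst_comp)
    ultimately show ?thesis using False res lo1 by (simp add: nth_append)
  qed
qed


theorem mainTheorem7:
  fixes f :: circ
  assumes "wt f" and "safe f"
  shows "\<forall>p \<in> set (sem f). \<forall>m \<in> Poly_Mapping.keys p. \<forall>i. Poly_Mapping.lookup m i \<le> 1"
proof -
  let ?n = "cdom f"
  obtain outs E ands k' where g: "graph f [0..<?n] ?n = (outs, E, ands, k')"
    by (cases "graph f [0..<?n] ?n") auto
  have sf: "\<forall>(p, q) \<in> set ands. \<not> (\<exists>i < ?n. (i, p) \<in> E\<^sup>* \<and> (i, q) \<in> E\<^sup>*)"
    using assms(2) g by (simp add: safe_def)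
  have A: "\<forall>(a,b)\<in>set ands. Rch E ?n a \<inter> Rch E ?n b = {}"
    using sf by (auto simp: Rch_def)
  have Q: "\<forall>t<cdom f. MLin (Var t) \<and> vars (Var t) \<subseteq> Rch E ?n ([0..<?n]!t)"
    by (auto simp: MLin_Var vars_Var Rch_def)
  show ?thesis
  proof
    fix p assume "p \<in> set (sem f)"
    then obtain j where j: "j < length (sem f)" "p = sem f ! j" by (auto simp: in_set_conv_nth)
    then have "j < ccod f" using len_sem[OF assms(1)] by simp
    then have "MLin (subst Var (sem f ! j))"
      using main_lemma[OF assms(1) _ g subset_refl subset_refl A Q] by simp
    then show "\<forall>m \<in> Poly_Mapping.keys p. \<forall>i. Poly_Mapping.lookup m i \<le> 1"
      using j by (simp add: subst_Var_id MLin_def)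
  qed
qed

end
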